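(* Let $N$ be a finite group, let $\chi\in\operatorname{Irr}(N)$ with $\operatorname Z(N)\subseteq\ker\chi$, and let $A$ be a subgroup of $\operatorname{Aut}(N)$ containing the group of inner automorphisms $\operatorname{Inn}(N)\cong N/\operatorname Z(N)$. Regard $\chi$ as a character of $\operatorname{Inn}(N)$ and assume it extends to its stabilizer $A_\chi$ in $A$. Then for every finite group $G$ with $N\trianglelefteq G$ such that the image of $G$ in $\operatorname{Aut}(N)$ (via conjugation) is contained in $A$, the character $\chi$ extends to its stabilizer $G_\chi$. *)

theory Defs
  imports "HOL-Algebra.Algebra" "Jordan_Normal_Form.Matrix"
begin

definition mat_trace :: "complex mat \<Rightarrow> complex" where
  "mat_trace A = (\<Sum>i<dim_row A. A $$ (i, i))"

definition is_rep :: "('a, 'b) monoid_scheme \<Rightarrow> nat \<Rightarrow> ('a \<Rightarrow> complex mat) \<Rightarrow> bool" where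
  "is_rep H n \<rho> \<longleftrightarrow>
     (\<forall>h\<in>carrier H. \<rho> h \<in> carrier_mat n n) \<and>
     \<rho> \<one>\<^bsub>H\<^esub> = 1\<^sub>m n \<and>
     (\<forall>x\<in>carrier H. \<forall>y\<in>carrier H. \<rho> (x \<otimes>\<^bsub>H\<^esub> y) = \<rho> x * \<rho> y)"

definition is_subspace :: "nat \<Rightarrow> complex vec set \<Rightarrow> bool" where
  "is_subspace n W \<longleftrightarrow> W \<subseteq> carrier_vec n \<and> 0\<^sub>v n \<in> W \<and>
     (\<forall>v\<in>W. \<forall>w\<in>W. v + w \<in> W) \<and> (\<forall>c. \<forall>v\<in>W. c \<cdot>\<^sub>v v \<in> W)"

definition is_irred_rep :: "('a, 'b) monoid_scheme \<Rightarrow> nat \<Rightarrow> ('a \<Rightarrow> complex mat) \<Rightarrow> bool" where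
  "is_irred_rep H n \<rho> \<longleftrightarrow> is_rep H n \<rho> \<and> n > 0 \<and>
     (\<forall>W. is_subspace n W \<and> (\<forall>h\<in>carrier H. \<forall>w\<in>W. \<rho> h *\<^sub>v w \<in> W)
          \<longrightarrow> W = {0\<^sub>v n} \<or> W = carrier_vec n)"

text \<open>Characters are compared on the carrier only.\<close>
definition is_character :: "('a, 'b) monoid_scheme \<Rightarrow> ('a \<Rightarrow> complex) \<Rightarrow> bool" where
  "is_character H \<chi> \<longleftrightarrow> (\<exists>n \<rho>. is_rep H n \<rho> \<and> (\<forall>h\<in>carrier H. \<chi> h = mat_trace (\<rho> h)))"

definition is_irr_character :: "('a, 'b) monoid_scheme \<Rightarrow> ('a \<Rightarrow> complex) \<Rightarrow> bool" where
  "is_irr_character H \<chi> \<longleftrightarrow> (\<exists>n \<rho>. is_irred_rep H n \<rho> \<and> (\<forall>h\<in>carrier H. \<chi> h = mat_trace (\<rho> h)))"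

definition group_center :: "('a, 'b) monoid_scheme \<Rightarrow> 'a set" where
  "group_center G = {z \<in> carrier G. \<forall>g\<in>carrier G. z \<otimes>\<^bsub>G\<^esub> g = g \<otimes>\<^bsub>G\<^esub> z}"

definition char_kernel :: "('a, 'b) monoid_scheme \<Rightarrow> ('a \<Rightarrow> complex) \<Rightarrow> 'a set" where
  "char_kernel G \<chi> = {g \<in> carrier G. \<chi> g = \<chi> \<one>\<^bsub>G\<^esub>}"

text \<open>Inner automorphism of N induced by a (as an element of AutoGroup N, i.e. extensional).\<close>
definition inner_aut :: "('a, 'b) monoid_scheme \<Rightarrow> 'a \<Rightarrow> ('a \<Rightarrow> 'a)" where
  "inner_aut N a = (\<lambda>x\<in>carrier N. a \<otimes>\<^bsub>N\<^esub> x \<otimes>\<^bsub>N\<^esub> inv\<^bsub>N\<^esub> a)"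

definition Inn :: "('a, 'b) monoid_scheme \<Rightarrow> ('a \<Rightarrow> 'a) set" where
  "Inn N = inner_aut N ` carrier N"

definition conj_on :: "('a, 'b) monoid_scheme \<Rightarrow> 'a set \<Rightarrow> 'a \<Rightarrow> ('a \<Rightarrow> 'a)" where
  "conj_on G N g = (\<lambda>x\<in>N. g \<otimes>\<^bsub>G\<^esub> x \<otimes>\<^bsub>G\<^esub> inv\<^bsub>G\<^esub> g)"

definition char_stab :: "'g set \<Rightarrow> ('g \<Rightarrow> 'a \<Rightarrow> 'a) \<Rightarrow> 'a set \<Rightarrow> ('a \<Rightarrow> complex) \<Rightarrow> 'g set" where
  "char_stab S act N \<chi> = {g \<in> S. \<forall>x\<in>N. \<chi> (act g x) = \<chi> x}"

end

theory Submission
  imports Defs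
begin

theorem lemma2p4:
  fixes N :: "'a monoid" and \<chi> :: "'a \<Rightarrow> complex" and A :: "('a \<Rightarrow> 'a) set"
  assumes "group N" and "finite (carrier N)"
    and "is_irr_character N \<chi>"
    and "group_center N \<subseteq> char_kernel N \<chi>"
    and "subgroup A (AutoGroup N)"
    and "Inn N \<subseteq> A"
    and "\<exists>\<psi>. is_character ((AutoGroup N)\<lparr>carrier := char_stab A (\<lambda>\<alpha>. \<alpha>) (carrier N) \<chi>\<rparr>) \<psi>
              \<and> (\<forall>a\<in>carrier N. \<psi> (inner_aut N a) = \<chi> a)"
  shows "\<forall>G :: 'a monoid. group G \<and> finite (carrier G) \<and> carrier N \<lhd> G
           \<and> N = G\<lparr>carrier := carrier N\<rparr>
           \<and> (\<forall>g\<in>carrier G. conj_on G (carrier N) g \<in> A)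
         \<longrightarrow> (\<exists>\<psi>. is_character (G\<lparr>carrier := char_stab (carrier G) (conj_on G (carrier N)) (carrier N) \<chi>\<rparr>) \<psi>
                  \<and> (\<forall>x\<in>carrier N. \<psi> x = \<chi> x))"
proof (intro allI impI)
  fix G :: "'a monoid"
  assume H: "group G \<and> finite (carrier G) \<and> carrier N \<lhd> G
           \<and> N = G\<lparr>carrier := carrier N\<rparr>
           \<and> (\<forall>g\<in>carrier G. conj_on G (carrier N) g \<in> A)"
  have gG: "group G" and nor: "carrier N \<lhd> G" and NG: "N = G\<lparr>carrier := carrier N\<rparr>"
    and cA: "\<And>g. g \<in> carrier G \<Longrightarrow> conj_on G (carrier N) g \<in> A" using H by blast+
  have sub: "subgroup (carrier N) G" using nor normal_imp_subgroup by blast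
  have NsubG: "carrier N \<subseteq> carrier G" using sub subgroup.subset by blast
  have conjN: "\<And>g x. g \<in> carrier G \<Longrightarrow> x \<in> carrier N \<Longrightarrow> g \<otimes>\<^bsub>G\<^esub> x \<otimes>\<^bsub>G\<^esub> inv\<^bsub>G\<^esub> g \<in> carrier N"
    by (rule normal.inv_op_closed2[OF nor])
  obtain \<psi> where psi: "is_character ((AutoGroup N)\<lparr>carrier := char_stab A (\<lambda>\<alpha>. \<alpha>) (carrier N) \<chi>\<rparr>) \<psi>"
    and ext: "\<forall>a\<in>carrier N. \<psi> (inner_aut N a) = \<chi> a" using assms(7) by blast
  obtain n \<rho> where rep: "is_rep ((AutoGroup N)\<lparr>carrier := char_stab A (\<lambda>\<alpha>. \<alpha>) (carrier N) \<chi>\<rparr>) n \<rho>"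
    and tr: "\<forall>h\<in>char_stab A (\<lambda>\<alpha>. \<alpha>) (carrier N) \<chi>. \<psi> h = mat_trace (\<rho> h)"
    using psi unfolding is_character_def by auto
  define \<phi> where "\<phi> = conj_on G (carrier N)"
  define S where "S = char_stab (carrier G) (conj_on G (carrier N)) (carrier N) \<chi>"
  have AB: "A \<subseteq> Bij (carrier N)"
  proof -
    have "A \<subseteq> carrier (AutoGroup N)" using assms(5) by (rule subgroup.subset)
    moreover have "carrier (AutoGroup N) = auto N" unfolding AutoGroup_def by simp
    ultimately show ?thesis unfolding auto_def by blast
  qed
  have phiS: "\<And>g. g \<in> S \<Longrightarrow> \<phi> g \<in> char_stab A (\<lambda>\<alpha>. \<alpha>) (carrier N) \<chi>"
    using cA unfolding S_def \<phi>_def char_stab_def by auto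
  have SG: "S \<subseteq> carrier G" unfolding S_def char_stab_def by auto
  have one: "\<phi> \<one>\<^bsub>G\<^esub> = \<one>\<^bsub>AutoGroup N\<^esub>"
  proof -
    have "\<phi> \<one>\<^bsub>G\<^esub> = (\<lambda>x\<in>carrier N. x)"
      unfolding \<phi>_def conj_on_def
    proof (rule restrict_ext)
      fix x assume "x \<in> carrier N"
      then have "x \<in> carrier G" using NsubG by auto
      then show "\<one>\<^bsub>G\<^esub> \<otimes>\<^bsub>G\<^esub> x \<otimes>\<^bsub>G\<^esub> inv\<^bsub>G\<^esub> \<one>\<^bsub>G\<^esub> = x"
        using gG by (simp add: monoid.inv_one monoid.l_one monoid.r_one group.is_monoid)
    qed
    then show ?thesis unfolding AutoGroup_def BijGroup_def by simp
  qed
  have mul: "\<And>x y. x \<in> carrier G \<Longrightarrow> y \<in> carrier G \<Longrightarrow>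
      \<phi> (x \<otimes>\<^bsub>G\<^esub> y) = \<phi> x \<otimes>\<^bsub>AutoGroup N\<^esub> \<phi> y"
  proof -
    fix x y assume x: "x \<in> carrier G" and y: "y \<in> carrier G"
    have bx: "\<phi> x \<in> Bij (carrier N)" "\<phi> y \<in> Bij (carrier N)" using cA x y AB unfolding \<phi>_def by auto
    have "\<phi> x \<otimes>\<^bsub>AutoGroup N\<^esub> \<phi> y = compose (carrier N) (\<phi> x) (\<phi> y)"
      using bx unfolding AutoGroup_def BijGroup_def by simp
    also have "\<dots> = \<phi> (x \<otimes>\<^bsub>G\<^esub> y)"
      unfolding compose_def \<phi>_def conj_on_def
    proof (rule restrict_ext)
      fix z assume z: "z \<in> carrier N"
      have zG: "z \<in> carrier G" using z NsubG by auto
      have "y \<otimes>\<^bsub>G\<^esub> z \<otimes>\<^bsub>G\<^esub> inv\<^bsub>G\<^esub> y \<in> carrier N" using conjN y z by blast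
      then show "(\<lambda>xa\<in>carrier N. x \<otimes>\<^bsub>G\<^esub> xa \<otimes>\<^bsub>G\<^esub> inv\<^bsub>G\<^esub> x)
            ((\<lambda>x\<in>carrier N. y \<otimes>\<^bsub>G\<^esub> x \<otimes>\<^bsub>G\<^esub> inv\<^bsub>G\<^esub> y) z) =
           x \<otimes>\<^bsub>G\<^esub> y \<otimes>\<^bsub>G\<^esub> z \<otimes>\<^bsub>G\<^esub> inv\<^bsub>G\<^esub> (x \<otimes>\<^bsub>G\<^esub> y)"
      proof -
        have yi: "inv\<^bsub>G\<^esub> y \<in> carrier G" "inv\<^bsub>G\<^esub> x \<in> carrier G"
          using gG x y by (simp_all add: group.inv_closed)
        have iv: "inv\<^bsub>G\<^esub> (x \<otimes>\<^bsub>G\<^esub> y) = inv\<^bsub>G\<^esub> y \<otimes>\<^bsub>G\<^esub> inv\<^bsub>G\<^esub> x"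
          using gG x y by (rule group.inv_mult_group)
        have "x \<otimes>\<^bsub>G\<^esub> (y \<otimes>\<^bsub>G\<^esub> z \<otimes>\<^bsub>G\<^esub> inv\<^bsub>G\<^esub> y) \<otimes>\<^bsub>G\<^esub> inv\<^bsub>G\<^esub> x
              = x \<otimes>\<^bsub>G\<^esub> y \<otimes>\<^bsub>G\<^esub> z \<otimes>\<^bsub>G\<^esub> (inv\<^bsub>G\<^esub> y \<otimes>\<^bsub>G\<^esub> inv\<^bsub>G\<^esub> x)"
          using x y zG yi by (simp add: group.is_monoid[OF gG] monoid.m_assoc monoid.m_closed)
        then show ?thesis using z iv \<open>y \<otimes>\<^bsub>G\<^esub> z \<otimes>\<^bsub>G\<^esub> inv\<^bsub>G\<^esub> y \<in> carrier N\<close> by simp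
      qed
    qed
    finally show "\<phi> (x \<otimes>\<^bsub>G\<^esub> y) = \<phi> x \<otimes>\<^bsub>AutoGroup N\<^esub> \<phi> y" by simp
  qed
  have rep2: "is_rep (G\<lparr>carrier := S\<rparr>) n (\<rho> \<circ> \<phi>)"
    unfolding is_rep_def
  proof (intro conjI ballI)
    have r1: "\<forall>h\<in>char_stab A (\<lambda>\<alpha>. \<alpha>) (carrier N) \<chi>. \<rho> h \<in> carrier_mat n n"
      and r2: "\<rho> \<one>\<^bsub>AutoGroup N\<^esub> = 1\<^sub>m n"
      and r3: "\<forall>x\<in>char_stab A (\<lambda>\<alpha>. \<alpha>) (carrier N) \<chi>. \<forall>y\<in>char_stab A (\<lambda>\<alpha>. \<alpha>) (carrier N) \<chi>.
               \<rho> (x \<otimes>\<^bsub>AutoGroup N\<^esub> y) = \<rho> x * \<rho> y"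
      using rep unfolding is_rep_def by auto
    fix h assume "h \<in> carrier (G\<lparr>carrier := S\<rparr>)"
    then have "h \<in> S" by simp
    then show "(\<rho> \<circ> \<phi>) h \<in> carrier_mat n n" using r1 phiS by auto
  next
    show "(\<rho> \<circ> \<phi>) \<one>\<^bsub>G\<lparr>carrier := S\<rparr>\<^esub> = 1\<^sub>m n"
      using rep one unfolding is_rep_def by simp
  next
    fix x y assume "x \<in> carrier (G\<lparr>carrier := S\<rparr>)" "y \<in> carrier (G\<lparr>carrier := S\<rparr>)"
    then have x: "x \<in> S" and y: "y \<in> S" by simp_all
    have "\<rho> (\<phi> x \<otimes>\<^bsub>AutoGroup N\<^esub> \<phi> y) = \<rho> (\<phi> x) * \<rho> (\<phi> y)"
      using rep phiS[OF x] phiS[OF y] unfolding is_rep_def by simp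
    then show "(\<rho> \<circ> \<phi>) (x \<otimes>\<^bsub>G\<lparr>carrier := S\<rparr>\<^esub> y) = (\<rho> \<circ> \<phi>) x * (\<rho> \<circ> \<phi>) y"
      using mul x y SG by (auto simp: subsetD)
  qed
  show "\<exists>\<psi>. is_character (G\<lparr>carrier := char_stab (carrier G) (conj_on G (carrier N)) (carrier N) \<chi>\<rparr>) \<psi>
                  \<and> (\<forall>x\<in>carrier N. \<psi> x = \<chi> x)"
  proof (intro exI conjI)
    show "is_character (G\<lparr>carrier := char_stab (carrier G) (conj_on G (carrier N)) (carrier N) \<chi>\<rparr>) (\<psi> \<circ> \<phi>)"
      unfolding is_character_def S_def[symmetric]
      apply (rule exI[of _ n], rule exI[of _ "\<rho> \<circ> \<phi>"])
      using rep2 tr phiS by auto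
    show "\<forall>x\<in>carrier N. (\<psi> \<circ> \<phi>) x = \<chi> x"
    proof
      fix x assume x: "x \<in> carrier N"
      have "\<phi> x = inner_aut N x"
        unfolding \<phi>_def conj_on_def inner_aut_def
      proof (rule restrict_ext)
        fix z assume "z \<in> carrier N"
        have mN: "monoid.mult N = monoid.mult G" using arg_cong[OF NG, of monoid.mult] by simp
        have iN: "inv\<^bsub>G\<lparr>carrier := carrier N\<rparr>\<^esub> x = inv\<^bsub>G\<^esub> x"
          using group.m_inv_consistent[OF gG sub x] .
        have gen: "\<And>M :: 'a monoid. M = G\<lparr>carrier := carrier N\<rparr> \<Longrightarrow> inv\<^bsub>M\<^esub> x = inv\<^bsub>G\<^esub> x"
          using iN by simp
        have "inv\<^bsub>N\<^esub> x = inv\<^bsub>G\<^esub> x" by (rule gen[OF NG])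
        then show "x \<otimes>\<^bsub>G\<^esub> z \<otimes>\<^bsub>G\<^esub> inv\<^bsub>G\<^esub> x = x \<otimes>\<^bsub>N\<^esub> z \<otimes>\<^bsub>N\<^esub> inv\<^bsub>N\<^esub> x"
          using mN by simp
      qed
      then show "(\<psi> \<circ> \<phi>) x = \<chi> x" using ext x by simp
    qed
  qed
qed

end
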